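(* Let $E$ be an Adams connected, strictly unital $A_\infty$-algebra (with Adams grading), whose unit spans the summand $k=E^0_0$. (a) If $E\cong k\oplus E^1_{-1}\oplus(E^2_{-3}\oplus E^2_{-4})\oplus E^3_{-6}\oplus E^4_{-7}$ as a $\mathbb{Z}^2$-graded vector space, then $m_n=0$ for $n\ne2,3,4$. (b) If $E\cong k\oplus E^1_{-1}\oplus(E^2_{-2}\oplus E^2_{-3})\oplus E^3_{-4}\oplus E^4_{-5}$, then $m_n=0$ for $n\neq2,3$. (c) If $E\cong k\oplus E^1_{-1}\oplus E^2_{-2}\oplus E^3_{-3}\oplus E^4_{-4}$, then $m_n=0$ for $n\ne2$.
   Context: An $A_\infty$-algebra with Adams grading over a field $k$ is a bigraded vector space $E=\bigoplus_{p\in\mathbb{Z},i\in\mathbb{Z}}E^p_i$ with $k$-linear maps $m_n:E^{\otimes n}\to E$ ($n\ge1$) of bidegree $(2-n,0)$ satisfying, for all $n\ge1$, the Stasheff identities $\sum(-1)^{r+st}m_{r+1+t}(\mathrm{id}^{\otimes r}\otimes m_s\otimes\mathrm{id}^{\otimes t})=0$, the sum over $n=r+s+t$ with $r,t\ge0$, $s\ge1$ (Koszul sign rule applies on elements). It is strictly unital if it has an element $1$ that is a unit for $m_2$ and $m_n(a_1,\dots,a_n)=0$ for $n\neq2$ whenever some $a_i=1$. Writing $E_i=\bigoplus_pE^p_i$, $E$ is Adams connected if $E_0=k$, either $E=\bigoplus_{i\ge0}E_i$ or $E=\bigoplus_{i\le0}E_i$, and each $E_i$ is finite-dimensional. *)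

theory Defs
  imports Main "HOL.Vector_Spaces"
begin

text \<open>A bigraded vector space over a field 'k: the ambient vector space 'v (with scalar
multiplication scale) is the internal direct sum of the subspaces Egr p i = E^p_i
(p cohomological degree, i Adams degree).\<close>
definition bigraded_vs :: "('k::field \<Rightarrow> 'v::ab_group_add \<Rightarrow> 'v) \<Rightarrow> (int \<Rightarrow> int \<Rightarrow> 'v set) \<Rightarrow> bool" where
  "bigraded_vs scale Egr \<longleftrightarrow>
     vector_space scale \<and>
     (\<forall>p i. module.subspace scale (Egr p i)) \<and>
     (\<forall>v. \<exists>!c :: int \<times> int \<Rightarrow> 'v.
            finite {d. c d \<noteq> 0} \<and> (\<forall>d. c d \<in> Egr (fst d) (snd d)) \<and>
            v = sum c {d. c d \<noteq> 0})"

definition homog :: "(int \<Rightarrow> int \<Rightarrow> 'v set) \<Rightarrow> (int \<times> int) list \<Rightarrow> 'v list \<Rightarrow> bool" where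
  "homog Egr ds as \<longleftrightarrow> length ds = length as \<and>
     (\<forall>j < length as. as ! j \<in> Egr (fst (ds ! j)) (snd (ds ! j)))"

definition par_sign :: "int \<Rightarrow> 'k::field" where
  "par_sign e = (if even e then 1 else -1)"

text \<open>An A-infinity algebra with Adams grading: m n is the operation m_n, applied to lists
of length n (values on other lists are irrelevant); it is k-multilinear, of bidegree
(2-n,0), and satisfies the Stasheff identities on homogeneous elements, with the Koszul
sign rule for the cohomological degree p (|m_s| = 2 - s).\<close>
definition Ainf_algebra :: "('k::field \<Rightarrow> 'v::ab_group_add \<Rightarrow> 'v) \<Rightarrow> (int \<Rightarrow> int \<Rightarrow> 'v set)
     \<Rightarrow> (nat \<Rightarrow> 'v list \<Rightarrow> 'v) \<Rightarrow> bool" where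
  "Ainf_algebra scale Egr m \<longleftrightarrow>
     bigraded_vs scale Egr \<and>
     (\<forall>n \<ge> 1. \<forall>as j. length as = n \<and> j < n \<longrightarrow>
        Vector_Spaces.linear scale scale (\<lambda>x. m n (as[j := x]))) \<and>
     (\<forall>n \<ge> 1. \<forall>ds as. homog Egr ds as \<and> length as = n \<longrightarrow>
        m n as \<in> Egr (sum_list (map fst ds) + 2 - int n) (sum_list (map snd ds))) \<and>
     (\<forall>n \<ge> 1. \<forall>ds as. homog Egr ds as \<and> length as = n \<longrightarrow>
        (\<Sum>r\<le>n. \<Sum>s\<in>{1..n - r}.
           scale (par_sign (int (r + s * (n - r - s)) + int s * sum_list (map fst (take r ds))))
             (m (r + 1 + (n - r - s))
                (take r as @ [m s (take s (drop r as))] @ drop (r + s) as))) = 0)"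

definition strictly_unital :: "(nat \<Rightarrow> 'v::zero list \<Rightarrow> 'v) \<Rightarrow> 'v \<Rightarrow> bool" where
  "strictly_unital m u \<longleftrightarrow>
     (\<forall>a. m 2 [u, a] = a \<and> m 2 [a, u] = a) \<and>
     (\<forall>n as. n \<ge> 1 \<and> n \<noteq> 2 \<and> length as = n \<and> u \<in> set as \<longrightarrow> m n as = 0)"

definition Ecol :: "('k::field \<Rightarrow> 'v::ab_group_add \<Rightarrow> 'v) \<Rightarrow> (int \<Rightarrow> int \<Rightarrow> 'v set) \<Rightarrow> int \<Rightarrow> 'v set" where
  "Ecol scale Egr i = module.span scale (\<Union>p. Egr p i)"

definition Adams_connected :: "('k::field \<Rightarrow> 'v::ab_group_add \<Rightarrow> 'v) \<Rightarrow> (int \<Rightarrow> int \<Rightarrow> 'v set) \<Rightarrow> bool" where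
  "Adams_connected scale Egr \<longleftrightarrow>
     (\<exists>w. w \<noteq> 0 \<and> Ecol scale Egr 0 = module.span scale {w}) \<and>
     ((\<forall>i < 0. Ecol scale Egr i = {0}) \<or> (\<forall>i > 0. Ecol scale Egr i = {0})) \<and>
     (\<forall>i. \<exists>B. finite B \<and> Ecol scale Egr i \<subseteq> module.span scale B)"

definition concentrated_in :: "(int \<Rightarrow> int \<Rightarrow> 'v::zero set) \<Rightarrow> (int \<times> int) set \<Rightarrow> bool" where
  "concentrated_in Egr S \<longleftrightarrow> (\<forall>p i. (p, i) \<notin> S \<longrightarrow> Egr p i = {0})"

end

theory Submission
  imports Defs
begin

lemma lin_sum_bound:
  fixes a b c :: int
  assumes "set ds \<subseteq> S" "\<forall>d\<in>S. a * fst d + b * snd d \<le> c"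
  shows "a * sum_list (map fst ds) + b * sum_list (map snd ds) \<le> c * int (length ds)"
  using assms
proof (induction ds)
  case Nil then show ?case by simp
next
  case (Cons d ds)
  then have "a * fst d + b * snd d \<le> c" by auto
  moreover have "a * sum_list (map fst ds) + b * sum_list (map snd ds) \<le> c * int (length ds)"
    using Cons by auto
  ultimately show ?case by (simp add: algebra_simps)
qed

lemma degree_vanish:
  fixes scale :: "'k::field \<Rightarrow> 'v::ab_group_add \<Rightarrow> 'v"
  assumes A: "Ainf_algebra scale Egr m"
    and C: "concentrated_in Egr S"
    and S0: "(0,0) \<in> S"
    and n1: "n \<ge> 1"
    and deg: "\<forall>ds. length ds = n \<and> set ds \<subseteq> S \<longrightarrow>
               (sum_list (map fst ds) + 2 - int n, sum_list (map snd ds)) \<notin> S"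
    and len: "length as = n"
  shows "m n as = 0"
proof -
  have bv: "bigraded_vs scale Egr" using A unfolding Ainf_algebra_def by blast
  have vs: "vector_space scale" using bv unfolding bigraded_vs_def by blast
  then interpret vector_space scale .
  have sub: "\<And>p i. subspace (Egr p i)" using bv unfolding bigraded_vs_def by blast
  have lin: "\<And>as j. length as = n \<Longrightarrow> j < n \<Longrightarrow> Vector_Spaces.linear scale scale (\<lambda>x. m n (as[j := x]))"
    using A n1 unfolding Ainf_algebra_def by blast
  have degm: "\<And>ds as. homog Egr ds as \<Longrightarrow> length as = n \<Longrightarrow>
      m n as \<in> Egr (sum_list (map fst ds) + 2 - int n) (sum_list (map snd ds))"
    using A n1 unfolding Ainf_algebra_def by blast
  define H where "H x \<longleftrightarrow> (\<exists>d\<in>S. x \<in> Egr (fst d) (snd d))" for x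
  have H0: "H 0" unfolding H_def using S0 subspace_0[OF sub] by force
  have base: "m n bs = 0" if "length bs = n" "\<forall>l<n. H (bs ! l)" for bs
  proof -
    define ds where "ds = map (\<lambda>x. SOME d. d \<in> S \<and> x \<in> Egr (fst d) (snd d)) bs"
    have pr: "\<And>l. l < n \<Longrightarrow> ds ! l \<in> S \<and> bs ! l \<in> Egr (fst (ds ! l)) (snd (ds ! l))"
    proof -
      fix l assume "l < n"
      then have "H (bs ! l)" using that by blast
      then show "ds ! l \<in> S \<and> bs ! l \<in> Egr (fst (ds ! l)) (snd (ds ! l))"
        unfolding ds_def H_def using \<open>l < n\<close> that(1)
        by (metis (mono_tags, lifting) nth_map someI_ex)
    qed
    have hom: "homog Egr ds bs" unfolding homog_def using pr that(1) by (auto simp: ds_def)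
    have lds: "length ds = n" using that(1) by (simp add: ds_def)
    have "set ds \<subseteq> S" using pr lds by (metis in_set_conv_nth subsetI)
    then have "(sum_list (map fst ds) + 2 - int n, sum_list (map snd ds)) \<notin> S"
      using deg lds by blast
    then have "Egr (sum_list (map fst ds) + 2 - int n) (sum_list (map snd ds)) = {0}"
      using C unfolding concentrated_in_def by blast
    then show ?thesis using degm[OF hom that(1)] by blast
  qed
  have step: "\<forall>bs. length bs = n \<and> (\<forall>l<n. k \<le> l \<longrightarrow> H (bs ! l)) \<longrightarrow> m n bs = 0"
    if "k \<le> n" for k
    using that
  proof (induction k)
    case 0
    then show ?case using base by auto
  next
    case (Suc k)
    show ?case
    proof (intro allI impI)
      fix bs assume bs: "length bs = n \<and> (\<forall>l<n. Suc k \<le> l \<longrightarrow> H (bs ! l))"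
      have kn: "k < n" using Suc.prems by simp
      obtain c :: "int \<times> int \<Rightarrow> 'v" where c: "finite {d. c d \<noteq> 0}" "\<forall>d. c d \<in> Egr (fst d) (snd d)"
        "bs ! k = sum c {d. c d \<noteq> 0}"
        using bv unfolding bigraded_vs_def by metis
      have Hc: "H (c d)" for d
      proof (cases "d \<in> S")
        case True then show ?thesis using c(2) unfolding H_def by blast
      next
        case False
        then have "Egr (fst d) (snd d) = {0}" using C unfolding concentrated_in_def
          by (metis prod.collapse)
        then have "c d = 0" using c(2) by blast
        then show ?thesis using H0 by simp
      qed
      interpret L: Vector_Spaces.linear scale scale "\<lambda>x. m n (bs[k := x])"
        using lin bs kn by blast
      have "m n bs = m n (bs[k := bs ! k])" by simp
      also have "\<dots> = (\<Sum>d\<in>{d. c d \<noteq> 0}. m n (bs[k := c d]))"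
        unfolding c(3) by (rule L.sum)
      also have "\<dots> = 0"
      proof (rule sum.neutral, rule ballI)
        fix d
        have "length (bs[k := c d]) = n" using bs by simp
        moreover have "\<forall>l<n. k \<le> l \<longrightarrow> H (bs[k := c d] ! l)"
        proof (intro allI impI)
          fix l assume "l < n" "k \<le> l"
          show "H (bs[k := c d] ! l)"
          proof (cases "l = k")
            case True then show ?thesis using Hc bs kn by simp
          next
            case False then show ?thesis using bs \<open>l < n\<close> \<open>k \<le> l\<close> by simp
          qed
        qed
        ultimately show "m n (bs[k := c d]) = 0" using Suc.IH kn by auto
      qed
      finally show "m n bs = 0" .
    qed
  qed
  show ?thesis using step[of n] len by auto
qed

theorem lemma3p2:
  fixes scale :: "'k::field \<Rightarrow> 'v::ab_group_add \<Rightarrow> 'v"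
    and Egr :: "int \<Rightarrow> int \<Rightarrow> 'v set"
    and m :: "nat \<Rightarrow> 'v list \<Rightarrow> 'v"
    and u :: 'v
  assumes "Ainf_algebra scale Egr m"
    and "strictly_unital m u"
    and "Adams_connected scale Egr"
    and "u \<noteq> 0"
    and "Egr 0 0 = module.span scale {u}"
  shows "(concentrated_in Egr {(0,0), (1,-1), (2,-3), (2,-4), (3,-6), (4,-7)} \<longrightarrow>
            (\<forall>n as. n \<ge> 1 \<and> n \<notin> {2,3,4} \<and> length as = n \<longrightarrow> m n as = 0)) \<and>
         (concentrated_in Egr {(0,0), (1,-1), (2,-2), (2,-3), (3,-4), (4,-5)} \<longrightarrow>
            (\<forall>n as. n \<ge> 1 \<and> n \<notin> {2,3} \<and> length as = n \<longrightarrow> m n as = 0)) \<and>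
         (concentrated_in Egr {(0,0), (1,-1), (2,-2), (3,-3), (4,-4)} \<longrightarrow>
            (\<forall>n as. n \<ge> 1 \<and> n \<noteq> 2 \<and> length as = n \<longrightarrow> m n as = 0))"
proof (intro conjI impI allI)
  fix n :: nat and as :: "'v list"
  let ?S = "{(0,0), (1,-1), (2,-3), (2,-4), (3,-6), (4,-7)} :: (int \<times> int) set"
  assume C: "concentrated_in Egr ?S" and h: "n \<ge> 1 \<and> n \<notin> {2,3,4} \<and> length as = n"
  show "m n as = 0"
  proof (rule degree_vanish[OF assms(1) C])
    show "\<forall>ds. length ds = n \<and> set ds \<subseteq> ?S \<longrightarrow>
        (sum_list (map fst ds) + 2 - int n, sum_list (map snd ds)) \<notin> ?S"
    proof (intro allI impI)
      fix ds :: "(int \<times> int) list" assume d: "length ds = n \<and> set ds \<subseteq> ?S"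
      show "(sum_list (map fst ds) + 2 - int n, sum_list (map snd ds)) \<notin> ?S"
      proof (cases "n = 1")
        case True
        then obtain x where "ds = [x]" using d by (cases ds) auto
        then show ?thesis using d True by auto
      next
        case False
        have 1: "1 * sum_list (map fst ds) + 1 * sum_list (map snd ds) \<le> 0 * int (length ds)"
          by (rule lin_sum_bound) (use d in auto)
        have 2: "3 * sum_list (map fst ds) + 2 * sum_list (map snd ds) \<le> 1 * int (length ds)"
          by (rule lin_sum_bound) (use d in auto)
        show ?thesis using 1 2 d h False by auto
      qed
    qed
  qed (use h in auto)
next
  fix n :: nat and as :: "'v list"
  let ?S = "{(0,0), (1,-1), (2,-2), (2,-3), (3,-4), (4,-5)} :: (int \<times> int) set"
  assume C: "concentrated_in Egr ?S" and h: "n \<ge> 1 \<and> n \<notin> {2,3} \<and> length as = n"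
  show "m n as = 0"
  proof (rule degree_vanish[OF assms(1) C])
    show "\<forall>ds. length ds = n \<and> set ds \<subseteq> ?S \<longrightarrow>
        (sum_list (map fst ds) + 2 - int n, sum_list (map snd ds)) \<notin> ?S"
    proof (intro allI impI)
      fix ds :: "(int \<times> int) list" assume d: "length ds = n \<and> set ds \<subseteq> ?S"
      show "(sum_list (map fst ds) + 2 - int n, sum_list (map snd ds)) \<notin> ?S"
      proof (cases "n = 1")
        case True
        then obtain x where "ds = [x]" using d by (cases ds) auto
        then show ?thesis using d True by auto
      next
        case False
        have 1: "1 * sum_list (map fst ds) + 1 * sum_list (map snd ds) \<le> 0 * int (length ds)"
          by (rule lin_sum_bound) (use d in auto)
        show ?thesis using 1 d h False by auto
      qed
    qed
  qed (use h in auto)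
next
  fix n :: nat and as :: "'v list"
  let ?S = "{(0,0), (1,-1), (2,-2), (3,-3), (4,-4)} :: (int \<times> int) set"
  assume C: "concentrated_in Egr ?S" and h: "n \<ge> 1 \<and> n \<noteq> 2 \<and> length as = n"
  show "m n as = 0"
  proof (rule degree_vanish[OF assms(1) C])
    show "\<forall>ds. length ds = n \<and> set ds \<subseteq> ?S \<longrightarrow>
        (sum_list (map fst ds) + 2 - int n, sum_list (map snd ds)) \<notin> ?S"
    proof (intro allI impI)
      fix ds :: "(int \<times> int) list" assume d: "length ds = n \<and> set ds \<subseteq> ?S"
      have 1: "1 * sum_list (map fst ds) + 1 * sum_list (map snd ds) \<le> 0 * int (length ds)"
        by (rule lin_sum_bound) (use d in auto)
      have 2: "(-1) * sum_list (map fst ds) + (-1) * sum_list (map snd ds) \<le> 0 * int (length ds)"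
        by (rule lin_sum_bound) (use d in auto)
      show "(sum_list (map fst ds) + 2 - int n, sum_list (map snd ds)) \<notin> ?S"
        using 1 2 d h by auto
    qed
  qed (use h in auto)
qed

end
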